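(* Let $\gamma:\mathbb{R}\to\mathbb{R}^3$ be a $C^\infty$ $l$-periodic curve parametrized by arc length, $\xi$ a $C^\infty$ $l$-odd-periodic unit vector field along $\gamma$ with $\gamma'(s),\xi(s)$ linearly independent for all $s$ and $\det(\gamma',\xi,\xi')\equiv 0$, and let $F(s,u)=\gamma(s)+u\xi(s)$, $(s,u)\in\mathbb{R}^2$, regarded on $M=\mathbb{R}^2/\!\sim$. Let $\nu(s)=\gamma'(s)\times\xi(s)/|\gamma'(s)\times\xi(s)|$. Then: (i) every singular point of $F$ is non-degenerate, i.e. $d\lambda\neq 0$ there, where $\lambda=\det(F_s,F_u,\nu)$; (ii) the singular set of $F$ is $$S(F)=\left\{(s,u)\in M : u=-\frac{|\gamma'(s)\times\xi(s)|^2}{\gamma'(s)\cdot\xi'(s)},\ \xi'(s)\neq 0\right\};$$ (iii) along the singular set, a null vector field of $F$ (a nonzero vector field $\eta$ with $dF(\eta)=0$) is given by $\dfrac{\partial}{\partial s}-(\gamma'\cdot\xi)\dfrac{\partial}{\partial u}$.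
   Context: $l$-periodic means $\gamma(s+l)=\gamma(s)$; $l$-odd-periodic means $\xi(s+l)=-\xi(s)$; $\sim$ identifies $(s,u)$ with $(s+l,-u)$. A singular point is a point where the Jacobian of $F$ has rank $<2$. The condition $\det(\gamma',\xi,\xi')\equiv 0$ means $F$ is developable (flat). *)

theory Defs
  imports "HOL-Analysis.Analysis"
begin

definition C_inf :: "(real \<Rightarrow> real^3) \<Rightarrow> bool" where
  "C_inf f \<longleftrightarrow> (\<exists>D :: nat \<Rightarrow> real \<Rightarrow> real^3. D 0 = f \<and>
      (\<forall>n t. (D n has_vector_derivative D (Suc n) t) (at t)))"

definition det3 :: "real^3 \<Rightarrow> real^3 \<Rightarrow> real^3 \<Rightarrow> real" where
  "det3 a b c = det (vector [a, b, c] :: real^3^3)"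

definition ruled :: "(real \<Rightarrow> real^3) \<Rightarrow> (real \<Rightarrow> real^3) \<Rightarrow> real \<times> real \<Rightarrow> real^3" where
  "ruled \<gamma> \<xi> = (\<lambda>(s, u). \<gamma> s + u *\<^sub>R \<xi> s)"

definition partial_s :: "(real \<times> real \<Rightarrow> real^3) \<Rightarrow> real \<times> real \<Rightarrow> real^3" where
  "partial_s F p = vector_derivative (\<lambda>t. F (t, snd p)) (at (fst p))"

definition partial_u :: "(real \<times> real \<Rightarrow> real^3) \<Rightarrow> real \<times> real \<Rightarrow> real^3" where
  "partial_u F p = vector_derivative (\<lambda>t. F (fst p, t)) (at (snd p))"

definition singular_point :: "(real \<times> real \<Rightarrow> real^3) \<Rightarrow> real \<times> real \<Rightarrow> bool" where
  "singular_point F p \<longleftrightarrow> (\<exists>F'. (F has_derivative F') (at p) \<and> dim (range F') < 2)"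

end

theory Submission
  imports Defs
begin

lemma triple_swap: "(x::real^3) \<bullet> (cross3 y z) = (cross3 x y) \<bullet> z"
  by (simp add: cross3_simps)

lemma det3_eq: "det3 a b c = a \<bullet> (cross3 b c)"
  by (simp add: det3_def dot_cross_det)

lemma vtriple: "cross3 (g::real^3) (cross3 g x) = (g \<bullet> x) *\<^sub>R g - (g \<bullet> g) *\<^sub>R x"
  by (simp add: vec_eq_iff forall_3 cross3_def inner_vec_def sum_3 algebra_simps)

lemma decomp_id: "(n \<bullet> n) *\<^sub>R v = (((cross3 v x) \<bullet> n) *\<^sub>R g + ((cross3 g v) \<bullet> n) *\<^sub>R x + (v \<bullet> n) *\<^sub>R n)"
  if "n = cross3 (g::real^3) x" for v
  unfolding that by (simp add: vec_eq_iff forall_3 cross3_def inner_vec_def sum_3 algebra_simps)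

lemma bb_cross: "bounded_bilinear (\<lambda>x y::real^3. cross3 x y)"
  using bilinear_conv_bounded_bilinear bilinear_cross by blast

lemma differentiable_cross:
  fixes f g :: "'a::real_normed_vector \<Rightarrow> real^3"
  shows "f differentiable (at z within S) \<Longrightarrow> g differentiable (at z within S) \<Longrightarrow> (\<lambda>x. cross3 (f x) (g x)) differentiable (at z within S)"
  unfolding differentiable_def using bounded_bilinear.FDERIV[OF bb_cross] by blast

lemma dim_two:
  fixes v w :: "real^3" assumes w0: "w \<noteq> 0"
  shows "dim (range (\<lambda>h::real\<times>real. fst h *\<^sub>R v + snd h *\<^sub>R w)) < 2 \<longleftrightarrow> (\<exists>t. v = t *\<^sub>R w)"
proof
  assume "\<exists>t. v = t *\<^sub>R w"
  then obtain t where t: "v = t *\<^sub>R w" by blast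
  have "range (\<lambda>h::real\<times>real. fst h *\<^sub>R v + snd h *\<^sub>R w) \<subseteq> span {w}"
  proof
    fix y assume "y \<in> range (\<lambda>h::real\<times>real. fst h *\<^sub>R v + snd h *\<^sub>R w)"
    then obtain h where "y = fst h *\<^sub>R v + snd h *\<^sub>R w" by blast
    then have "y = (fst h * t + snd h) *\<^sub>R w" by (simp add: t algebra_simps)
    then show "y \<in> span {w}" using span_mul[OF span_base[of w "{w}"], of "fst h * t + snd h"] by simp
  qed
  then have "dim (range (\<lambda>h::real\<times>real. fst h *\<^sub>R v + snd h *\<^sub>R w)) \<le> card {w}"
    using dim_le_card by blast
  then show "dim (range (\<lambda>h::real\<times>real. fst h *\<^sub>R v + snd h *\<^sub>R w)) < 2" by simp
next
  assume d: "dim (range (\<lambda>h::real\<times>real. fst h *\<^sub>R v + snd h *\<^sub>R w)) < 2"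
  show "\<exists>t. v = t *\<^sub>R w"
  proof (rule ccontr)
    assume nt: "\<not> (\<exists>t. v = t *\<^sub>R w)"
    have vw: "v \<noteq> w" using nt by (metis scaleR_one)
    have nsp: "v \<notin> span {w}" unfolding span_singleton using nt by blast
    have i1: "independent {w}"
      by (rule independent_insertI) (use w0 independent_empty in auto)
    have ind: "independent {v, w}"
      by (rule independent_insertI[OF nsp i1])
    have sub: "{v, w} \<subseteq> range (\<lambda>h::real\<times>real. fst h *\<^sub>R v + snd h *\<^sub>R w)"
    proof -
      have "v \<in> range (\<lambda>h::real\<times>real. fst h *\<^sub>R v + snd h *\<^sub>R w)"
        by (rule range_eqI[where x="(1,0)"]) simp
      moreover have "w \<in> range (\<lambda>h::real\<times>real. fst h *\<^sub>R v + snd h *\<^sub>R w)"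
        by (rule range_eqI[where x="(0,1)"]) simp
      ultimately show ?thesis by blast
    qed
    have "card {v, w} \<le> dim (range (\<lambda>h::real\<times>real. fst h *\<^sub>R v + snd h *\<^sub>R w))"
      by (rule independent_card_le_dim[OF sub ind])
    moreover have "card {v, w} = 2" using vw by simp
    ultimately show False using d by linarith
  qed
qed

lemma hvd_fst:
  assumes "(f has_vector_derivative f') (at (fst p))"
  shows "((\<lambda>q::real\<times>real. f (fst q)) has_derivative (\<lambda>h. fst h *\<^sub>R f')) (at p)"
proof -
  have "(f has_derivative (\<lambda>t. t *\<^sub>R f')) (at (fst p))"
    using assms by (simp add: has_vector_derivative_def)
  then show ?thesis
    using has_derivative_compose[OF has_derivative_fst[OF has_derivative_ident, of "at p"]] by blast
qed

lemma hd_F: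
  assumes "(\<gamma> has_vector_derivative g) (at s)" "(\<xi> has_vector_derivative x') (at s)"
  shows "(ruled \<gamma> \<xi> has_derivative (\<lambda>h. fst h *\<^sub>R (g + u *\<^sub>R x') + snd h *\<^sub>R \<xi> s)) (at (s,u))"
proof -
  have e: "ruled \<gamma> \<xi> = (\<lambda>q. \<gamma> (fst q) + snd q *\<^sub>R \<xi> (fst q))"
    by (auto simp: ruled_def)
  have 1: "((\<lambda>q::real\<times>real. \<gamma> (fst q)) has_derivative (\<lambda>h. fst h *\<^sub>R g)) (at (s,u))"
    using hvd_fst[of \<gamma> g "(s,u)"] assms by simp
  have 2: "((\<lambda>q::real\<times>real. \<xi> (fst q)) has_derivative (\<lambda>h. fst h *\<^sub>R x')) (at (s,u))"
    using hvd_fst[of \<xi> x' "(s,u)"] assms by simp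
  have 3: "((\<lambda>q::real\<times>real. snd q) has_derivative (\<lambda>h. snd h)) (at (s,u))"
    by (rule has_derivative_snd[OF has_derivative_ident])
  have "((\<lambda>q. \<gamma> (fst q) + snd q *\<^sub>R \<xi> (fst q)) has_derivative
     (\<lambda>h. fst h *\<^sub>R g + (snd (s,u) *\<^sub>R (fst h *\<^sub>R x') + snd h *\<^sub>R \<xi> (fst (s,u))))) (at (s,u))"
    by (intro has_derivative_add 1 has_derivative_scaleR 2 3)
  then show ?thesis unfolding e
    by (rule has_derivative_eq_rhs) (auto simp: fun_eq_iff algebra_simps)
qed

lemma partial_s_ruled:
  assumes "(\<gamma> has_vector_derivative g) (at s)" "(\<xi> has_vector_derivative x') (at s)"
  shows "partial_s (ruled \<gamma> \<xi>) (s,u) = g + u *\<^sub>R x'"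
proof -
  have "((\<lambda>t. \<gamma> t + u *\<^sub>R \<xi> t) has_vector_derivative (g + (u *\<^sub>R x' + 0 *\<^sub>R \<xi> s))) (at s)"
    by (intro has_vector_derivative_add assms has_vector_derivative_scaleR DERIV_const)
  then show ?thesis unfolding partial_s_def ruled_def by (auto intro!: vector_derivative_at)
qed

lemma partial_u_ruled:
  shows "partial_u (ruled \<gamma> \<xi>) (s,u) = \<xi> s"
proof -
  have "((\<lambda>t. \<gamma> s + t *\<^sub>R \<xi> s) has_vector_derivative \<xi> s) (at u)"
    using has_vector_derivative_add[OF has_vector_derivative_const has_vector_derivative_scaleR[OF DERIV_ident has_vector_derivative_const]]
    by simp
  then show ?thesis unfolding partial_u_def ruled_def
    by (auto intro!: vector_derivative_at)
qed

theorem lemma2p6: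
  fixes \<gamma> \<xi> :: "real \<Rightarrow> real^3" and l :: real
  defines "\<gamma>' \<equiv> (\<lambda>s. vector_derivative \<gamma> (at s))"
      and "\<xi>' \<equiv> (\<lambda>s. vector_derivative \<xi> (at s))"
      and "F \<equiv> ruled \<gamma> \<xi>"
      and "\<nu> \<equiv> (\<lambda>s. (1 / norm (cross3 (vector_derivative \<gamma> (at s)) (\<xi> s))) *\<^sub>R
                      cross3 (vector_derivative \<gamma> (at s)) (\<xi> s))"
  assumes l_pos: "l > 0"
      and smooth_\<gamma>: "C_inf \<gamma>" and smooth_\<xi>: "C_inf \<xi>"
      and periodic: "\<forall>s. \<gamma> (s + l) = \<gamma> s"
      and odd_periodic: "\<forall>s. \<xi> (s + l) = - \<xi> s"
      and arclength: "\<forall>s. norm (\<gamma>' s) = 1"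
      and unit: "\<forall>s. norm (\<xi> s) = 1"
      and lin_indep: "\<forall>s a b. a *\<^sub>R \<gamma>' s + b *\<^sub>R \<xi> s = 0 \<longrightarrow> a = 0 \<and> b = 0"
      and flat: "\<forall>s. det3 (\<gamma>' s) (\<xi> s) (\<xi>' s) = 0"
  shows "(\<forall>p. singular_point F p \<longrightarrow>
            (\<exists>L. ((\<lambda>q. det3 (partial_s F q) (partial_u F q) (\<nu> (fst q))) has_derivative L) (at p)
                 \<and> L \<noteq> (\<lambda>_. 0)))
       \<and> (\<forall>s u. singular_point F (s, u) \<longleftrightarrow>
            (u = - (norm (cross3 (\<gamma>' s) (\<xi> s)))\<^sup>2 / (\<gamma>' s \<bullet> \<xi>' s) \<and> \<xi>' s \<noteq> 0))
       \<and> (\<forall>s u. singular_point F (s, u) \<longrightarrow>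
            (1, - (\<gamma>' s \<bullet> \<xi> s)) \<noteq> (0 :: real \<times> real) \<and>
            (\<exists>F'. (F has_derivative F') (at (s, u)) \<and> F' (1, - (\<gamma>' s \<bullet> \<xi> s)) = 0))"
proof -
  obtain Dg where Dg0: "Dg 0 = \<gamma>" and Dg: "\<And>n t. (Dg n has_vector_derivative Dg (Suc n) t) (at t)"
    using smooth_\<gamma> unfolding C_inf_def by blast
  obtain Dx where Dx0: "Dx 0 = \<xi>" and Dx: "\<And>n t. (Dx n has_vector_derivative Dx (Suc n) t) (at t)"
    using smooth_\<xi> unfolding C_inf_def by blast
  have gD: "\<gamma>' = Dg (Suc 0)"
  proof
    fix t show "\<gamma>' t = Dg (Suc 0) t"
      unfolding \<gamma>'_def using Dg[of 0 t] Dg0 by (simp add: vector_derivative_at)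
  qed
  have xD: "\<xi>' = Dx (Suc 0)"
  proof
    fix t show "\<xi>' t = Dx (Suc 0) t"
      unfolding \<xi>'_def using Dx[of 0 t] Dx0 by (simp add: vector_derivative_at)
  qed
  have hvg: "\<And>t. (\<gamma> has_vector_derivative \<gamma>' t) (at t)" using Dg[of 0] Dg0 gD by simp
  have hvx: "\<And>t. (\<xi> has_vector_derivative \<xi>' t) (at t)" using Dx[of 0] Dx0 xD by simp
  have hvx': "\<And>t. (\<xi>' has_vector_derivative Dx 2 t) (at t)" using Dx[of 1] xD by (simp add: numeral_2_eq_2)
  have hvg': "\<And>t. (\<gamma>' has_vector_derivative Dg 2 t) (at t)" using Dg[of 1] gD by (simp add: numeral_2_eq_2)
  have gg: "\<And>s. \<gamma>' s \<bullet> \<gamma>' s = 1" using arclength by (simp add: power2_norm_eq_inner[symmetric])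
  have xx: "\<And>s. \<xi> s \<bullet> \<xi> s = 1" using unit by (simp add: power2_norm_eq_inner[symmetric])
  have xx': "\<And>s. \<xi> s \<bullet> \<xi>' s = 0"
  proof -
    fix s
    have d1: "((\<lambda>t. \<xi> t \<bullet> \<xi> t) has_derivative (\<lambda>h. \<xi> s \<bullet> (h *\<^sub>R \<xi>' s) + (h *\<^sub>R \<xi>' s) \<bullet> \<xi> s)) (at s)"
      using hvx[of s] unfolding has_vector_derivative_def by (intro has_derivative_inner) auto
    have "(\<lambda>t. \<xi> t \<bullet> \<xi> t) = (\<lambda>t. 1)" using xx by auto
    then have d2: "((\<lambda>t. \<xi> t \<bullet> \<xi> t) has_derivative (\<lambda>h. 0)) (at s)" by simp
    have "(\<lambda>h. \<xi> s \<bullet> (h *\<^sub>R \<xi>' s) + (h *\<^sub>R \<xi>' s) \<bullet> \<xi> s) = (\<lambda>h::real. 0)"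
      using has_derivative_unique[OF d1 d2] .
    then have "\<xi> s \<bullet> (1 *\<^sub>R \<xi>' s) + (1 *\<^sub>R \<xi>' s) \<bullet> \<xi> s = 0" by metis
    then show "\<xi> s \<bullet> \<xi>' s = 0" by (simp add: inner_commute)
  qed
  have n0: "\<And>s. cross3 (\<gamma>' s) (\<xi> s) \<noteq> 0"
  proof
    fix s assume "cross3 (\<gamma>' s) (\<xi> s) = 0"
    then have "(\<gamma>' s \<bullet> \<xi> s) *\<^sub>R \<gamma>' s + (-1) *\<^sub>R \<xi> s = 0"
      using vtriple[of "\<gamma>' s" "\<xi> s"] gg[of s] by simp
    then show False using lin_indep[rule_format, where s=s and a="\<gamma>' s \<bullet> \<xi> s" and b="-1"] by simp
  qed
  have key: "\<And>s. \<exists>a. \<xi>' s = a *\<^sub>R \<gamma>' s + (- a * (\<gamma>' s \<bullet> \<xi> s)) *\<^sub>R \<xi> s"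
  proof -
    fix s
    define n where "n = cross3 (\<gamma>' s) (\<xi> s)"
    have "det3 (\<gamma>' s) (\<xi> s) (\<xi>' s) = n \<bullet> \<xi>' s" unfolding n_def det3_eq by (rule triple_swap)
    then have nx: "\<xi>' s \<bullet> n = 0" using flat[rule_format, of s] by (simp add: inner_commute)
    have N: "n \<bullet> n \<noteq> 0" using n0[of s] unfolding n_def by simp
    define a where "a = (cross3 (\<xi>' s) (\<xi> s) \<bullet> n) / (n \<bullet> n)"
    define b where "b = (cross3 (\<gamma>' s) (\<xi>' s) \<bullet> n) / (n \<bullet> n)"
    have "(n \<bullet> n) *\<^sub>R \<xi>' s = (n \<bullet> n) *\<^sub>R (a *\<^sub>R \<gamma>' s + b *\<^sub>R \<xi> s)"
      using decomp_id[OF n_def, of "\<xi>' s"] nx N unfolding a_def b_def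
      by (simp add: scaleR_add_right)
    then have e: "\<xi>' s = a *\<^sub>R \<gamma>' s + b *\<^sub>R \<xi> s" using N by simp
    have "\<xi> s \<bullet> \<xi>' s = a * (\<gamma>' s \<bullet> \<xi> s) + b"
      unfolding e using xx[of s] by (simp add: inner_add_right inner_commute)
    then have "b = - a * (\<gamma>' s \<bullet> \<xi> s)" using xx'[of s] by simp
    then show "\<exists>a. \<xi>' s = a *\<^sub>R \<gamma>' s + (- a * (\<gamma>' s \<bullet> \<xi> s)) *\<^sub>R \<xi> s" using e by blast
  qed
  have hdF: "\<And>s u. (F has_derivative (\<lambda>h. fst h *\<^sub>R (\<gamma>' s + u *\<^sub>R \<xi>' s) + snd h *\<^sub>R \<xi> s)) (at (s,u))"
    unfolding F_def by (rule hd_F[OF hvg hvx])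
  have x0: "\<And>s. \<xi> s \<noteq> 0" using unit by (metis norm_zero zero_neq_one)
  have sing: "singular_point F (s,u) \<longleftrightarrow> 1 + u * a = 0"
    if ea: "\<xi>' s = a *\<^sub>R \<gamma>' s + (- a * (\<gamma>' s \<bullet> \<xi> s)) *\<^sub>R \<xi> s" for s u a
  proof -
    have "singular_point F (s,u) \<longleftrightarrow> dim (range (\<lambda>h::real\<times>real. fst h *\<^sub>R (\<gamma>' s + u *\<^sub>R \<xi>' s) + snd h *\<^sub>R \<xi> s)) < 2"
      unfolding singular_point_def
    proof
      assume "\<exists>F'. (F has_derivative F') (at (s, u)) \<and> dim (range F') < 2"
      then obtain F' where "(F has_derivative F') (at (s, u))" "dim (range F') < 2" by blast
      moreover have "F' = (\<lambda>h::real\<times>real. fst h *\<^sub>R (\<gamma>' s + u *\<^sub>R \<xi>' s) + snd h *\<^sub>R \<xi> s)"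
        using has_derivative_unique[OF calculation(1) hdF[of s u]] .
      ultimately show "dim (range (\<lambda>h::real\<times>real. fst h *\<^sub>R (\<gamma>' s + u *\<^sub>R \<xi>' s) + snd h *\<^sub>R \<xi> s)) < 2" by simp
    next
      assume "dim (range (\<lambda>h::real\<times>real. fst h *\<^sub>R (\<gamma>' s + u *\<^sub>R \<xi>' s) + snd h *\<^sub>R \<xi> s)) < 2"
      then show "\<exists>F'. (F has_derivative F') (at (s, u)) \<and> dim (range F') < 2" using hdF[of s u] by blast
    qed
    also have "\<dots> \<longleftrightarrow> (\<exists>t. \<gamma>' s + u *\<^sub>R \<xi>' s = t *\<^sub>R \<xi> s)"
      by (rule dim_two[OF x0])
    also have "\<dots> \<longleftrightarrow> 1 + u * a = 0"
    proof
      assume "\<exists>t. \<gamma>' s + u *\<^sub>R \<xi>' s = t *\<^sub>R \<xi> s"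
      then obtain t where "\<gamma>' s + u *\<^sub>R \<xi>' s = t *\<^sub>R \<xi> s" by blast
      then have "(1 + u * a) *\<^sub>R \<gamma>' s + (u * (- a * (\<gamma>' s \<bullet> \<xi> s)) - t) *\<^sub>R \<xi> s = 0"
        unfolding ea by (simp add: algebra_simps)
      then show "1 + u * a = 0" using lin_indep[rule_format, where s=s and a="1 + u * a"] by blast
    next
      assume "1 + u * a = 0"
      then have "\<gamma>' s + u *\<^sub>R \<xi>' s = (u * (- a * (\<gamma>' s \<bullet> \<xi> s))) *\<^sub>R \<xi> s"
      proof -
        have "\<gamma>' s + u *\<^sub>R \<xi>' s = (1 + u * a) *\<^sub>R \<gamma>' s + (u * (- a * (\<gamma>' s \<bullet> \<xi> s))) *\<^sub>R \<xi> s"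
          unfolding ea by (simp add: algebra_simps)
        then show ?thesis using \<open>1 + u * a = 0\<close> by simp
      qed
      then show "\<exists>t. \<gamma>' s + u *\<^sub>R \<xi>' s = t *\<^sub>R \<xi> s" by blast
    qed
    finally show ?thesis .
  qed
  have K: "\<And>s. (norm (cross3 (\<gamma>' s) (\<xi> s)))\<^sup>2 = 1 - (\<gamma>' s \<bullet> \<xi> s)\<^sup>2"
    using norm_cross_dot arclength unit by (metis add_diff_cancel_right' mult_1 power_one)
  have Kp: "\<And>s. 1 - (\<gamma>' s \<bullet> \<xi> s)\<^sup>2 \<noteq> 0"
    using K n0 by (metis norm_eq_zero power_eq_0_iff zero_neq_numeral)
  have P2: "singular_point F (s, u) \<longleftrightarrow>
            (u = - (norm (cross3 (\<gamma>' s) (\<xi> s)))\<^sup>2 / (\<gamma>' s \<bullet> \<xi>' s) \<and> \<xi>' s \<noteq> 0)" for s u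
  proof -
    obtain a where ea: "\<xi>' s = a *\<^sub>R \<gamma>' s + (- a * (\<gamma>' s \<bullet> \<xi> s)) *\<^sub>R \<xi> s" using key by blast
    define c where "c = \<gamma>' s \<bullet> \<xi> s"
    have gx': "\<gamma>' s \<bullet> \<xi>' s = a * (1 - c\<^sup>2)"
      unfolding ea c_def using gg[of s]
      by (simp add: inner_add_right algebra_simps power2_eq_square)
    have x'0: "\<xi>' s \<noteq> 0 \<longleftrightarrow> a \<noteq> 0"
    proof
      assume "\<xi>' s \<noteq> 0" then show "a \<noteq> 0" using ea by auto
    next
      assume a0: "a \<noteq> 0"
      show "\<xi>' s \<noteq> 0"
      proof
        assume "\<xi>' s = 0"
        then have "a *\<^sub>R \<gamma>' s + (- a * (\<gamma>' s \<bullet> \<xi> s)) *\<^sub>R \<xi> s = 0" using ea by simp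
        then show False using a0 lin_indep[rule_format, where s=s and a=a] by blast
      qed
    qed
    have Kc: "1 - c\<^sup>2 \<noteq> 0" using Kp c_def by simp
    have eqK: "\<And>K::real. K \<noteq> 0 \<Longrightarrow> - K / (a * K) = - 1 / a"
      by (case_tac "a = 0") (simp_all add: field_simps)
    have eq: "- (1 - c\<^sup>2) / (a * (1 - c\<^sup>2)) = - 1 / a" using eqK[OF Kc] .
    have "(1 + u * a = 0) \<longleftrightarrow> (u = - 1 / a \<and> a \<noteq> 0)"
      by (cases "a = 0") (auto simp: field_simps)
    then show ?thesis
      unfolding sing[OF ea] K gx' x'0 c_def[symmetric] eq .
  qed
  have P3: "singular_point F (s, u) \<longrightarrow>
            (1, - (\<gamma>' s \<bullet> \<xi> s)) \<noteq> (0 :: real \<times> real) \<and>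
            (\<exists>F'. (F has_derivative F') (at (s, u)) \<and> F' (1, - (\<gamma>' s \<bullet> \<xi> s)) = 0)" for s u
  proof
    assume sp: "singular_point F (s, u)"
    obtain a where ea: "\<xi>' s = a *\<^sub>R \<gamma>' s + (- a * (\<gamma>' s \<bullet> \<xi> s)) *\<^sub>R \<xi> s" using key by blast
    have ua: "u * a = -1" using sp sing[OF ea] by simp
    have "\<gamma>' s + u *\<^sub>R \<xi>' s + (- (\<gamma>' s \<bullet> \<xi> s)) *\<^sub>R \<xi> s
        = (1 + u * a) *\<^sub>R \<gamma>' s + (- (u * a) * (\<gamma>' s \<bullet> \<xi> s) - (\<gamma>' s \<bullet> \<xi> s)) *\<^sub>R \<xi> s"
      unfolding ea by (simp add: algebra_simps)
    also have "\<dots> = 0" using ua by simp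
    finally have "\<gamma>' s + u *\<^sub>R \<xi>' s + (- (\<gamma>' s \<bullet> \<xi> s)) *\<^sub>R \<xi> s = 0" .
    show "(1, - (\<gamma>' s \<bullet> \<xi> s)) \<noteq> (0 :: real \<times> real) \<and>
            (\<exists>F'. (F has_derivative F') (at (s, u)) \<and> F' (1, - (\<gamma>' s \<bullet> \<xi> s)) = 0)"
    proof (intro conjI exI)
      show "(1, - (\<gamma>' s \<bullet> \<xi> s)) \<noteq> (0 :: real \<times> real)" by (simp add: zero_prod_def)
      show "(F has_derivative (\<lambda>h. fst h *\<^sub>R (\<gamma>' s + u *\<^sub>R \<xi>' s) + snd h *\<^sub>R \<xi> s)) (at (s,u))"
        by (rule hdF)
      show "(\<lambda>h::real\<times>real. fst h *\<^sub>R (\<gamma>' s + u *\<^sub>R \<xi>' s) + snd h *\<^sub>R \<xi> s) (1, - (\<gamma>' s \<bullet> \<xi> s)) = 0"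
        unfolding fst_conv snd_conv scaleR_one
        by (rule \<open>\<gamma>' s + u *\<^sub>R \<xi>' s + (- (\<gamma>' s \<bullet> \<xi> s)) *\<^sub>R \<xi> s = 0\<close>)
    qed
  qed
  have P1: "\<exists>L. ((\<lambda>q. det3 (partial_s F q) (partial_u F q) (\<nu> (fst q))) has_derivative L) (at p)
                 \<and> L \<noteq> (\<lambda>_. 0)" if sp: "singular_point F p" for p
  proof -
    obtain s u where p: "p = (s, u)" by (cases p)
    obtain a where ea: "\<xi>' s = a *\<^sub>R \<gamma>' s + (- a * (\<gamma>' s \<bullet> \<xi> s)) *\<^sub>R \<xi> s" using key by blast
    have ua: "1 + u * a = 0" using sp sing[OF ea] p by simp
    then have a0: "a \<noteq> 0" by auto
    define lam where "lam = (\<lambda>q. det3 (partial_s F q) (partial_u F q) (\<nu> (fst q)))"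
    define H where "H = (\<lambda>t. cross3 (\<xi> t) (\<nu> t))"
    have lam_eq: "lam = (\<lambda>q. (\<gamma>' (fst q) + snd q *\<^sub>R \<xi>' (fst q)) \<bullet> H (fst q))"
    proof
      fix q :: "real \<times> real"
      obtain s' u' where q: "q = (s', u')" by (cases q)
      show "lam q = (\<gamma>' (fst q) + snd q *\<^sub>R \<xi>' (fst q)) \<bullet> H (fst q)"
        unfolding lam_def H_def q F_def
        by (simp add: partial_s_ruled[OF hvg hvx] partial_u_ruled det3_eq)
    qed
    have nu_eq: "\<nu> = (\<lambda>t. (1 / norm (cross3 (\<gamma>' t) (\<xi> t))) *\<^sub>R cross3 (\<gamma>' t) (\<xi> t))"
      unfolding \<nu>_def \<gamma>'_def by simp
    have dg: "(\<lambda>q::real\<times>real. \<gamma>' (fst q)) differentiable at p"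
      using hvd_fst[OF hvg'[of "fst p"]] by (rule differentiableI)
    have dx: "(\<lambda>q::real\<times>real. \<xi> (fst q)) differentiable at p"
      using hvd_fst[OF hvx[of "fst p"]] by (rule differentiableI)
    have dx': "(\<lambda>q::real\<times>real. \<xi>' (fst q)) differentiable at p"
      using hvd_fst[OF hvx'[of "fst p"]] by (rule differentiableI)
    have dn: "(\<lambda>q::real\<times>real. cross3 (\<gamma>' (fst q)) (\<xi> (fst q))) differentiable at p"
      by (rule differentiable_cross[OF dg dx])
    have dnorm: "(\<lambda>q::real\<times>real. norm (cross3 (\<gamma>' (fst q)) (\<xi> (fst q)))) differentiable at p"
      by (rule differentiable_compose[of norm, OF differentiable_norm_at[OF n0] dn])
    have dinv: "(\<lambda>q::real\<times>real. 1 / norm (cross3 (\<gamma>' (fst q)) (\<xi> (fst q)))) differentiable at p"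
      by (rule differentiable_divide[OF differentiable_const dnorm]) (use n0 in simp)
    have dnu: "(\<lambda>q::real\<times>real. \<nu> (fst q)) differentiable at p"
      unfolding nu_eq by (rule differentiable_scaleR[OF dinv dn])
    have dH: "(\<lambda>q::real\<times>real. H (fst q)) differentiable at p"
      unfolding H_def by (rule differentiable_cross[OF dx dnu])
    have dsnd: "(\<lambda>q::real\<times>real. snd q) differentiable at p"
      by (rule differentiableI[OF has_derivative_snd[OF has_derivative_ident]])
    have dG: "(\<lambda>q::real\<times>real. \<gamma>' (fst q) + snd q *\<^sub>R \<xi>' (fst q)) differentiable at p"
      by (rule differentiable_add[OF dg differentiable_scaleR[OF dsnd dx']])
    have "lam differentiable at p"
      unfolding lam_eq by (rule differentiable_inner[OF dG dH])
    then obtain L where hL: "(lam has_derivative L) (at p)" unfolding differentiable_def by blast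
    define k where "k = \<xi>' s \<bullet> H s"
    have path: "((\<lambda>t::real. (s, t)) has_derivative (\<lambda>h. (0, h))) (at u)"
      by (rule has_derivative_Pair[OF has_derivative_const has_derivative_ident, simplified])
    have comp: "((\<lambda>t. lam (s, t)) has_derivative (\<lambda>h. L (0, h))) (at u)"
      using has_derivative_compose[OF path] hL p by simp
    have de: "(\<lambda>t. lam (s, t)) = (\<lambda>t. \<gamma>' s \<bullet> H s + t * k)"
      unfolding lam_eq k_def by (simp add: inner_add_left)
    have dd: "((\<lambda>t. \<gamma>' s \<bullet> H s + t * k) has_derivative (\<lambda>h. h * k)) (at u)"
      by (auto intro!: derivative_eq_intros)
    have "(\<lambda>h. L (0, h)) = (\<lambda>h. h * k)"
      using has_derivative_unique[OF comp] dd de by simp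
    then have L01: "L (0, 1) = k" using fun_cong[of "\<lambda>h. L (0, h)" "\<lambda>h. h * k" 1] by simp
    define n where "n = cross3 (\<gamma>' s) (\<xi> s)"
    have nn: "norm n \<noteq> 0" using n0 n_def by simp
    have x'x: "cross3 (\<xi>' s) (\<xi> s) = a *\<^sub>R n"
      unfolding ea n_def cross_add_left cross_mult_left cross_refl by simp
    have "k = (1 / norm n) * (\<xi>' s \<bullet> cross3 (\<xi> s) n)"
      unfolding k_def H_def nu_eq n_def by (simp add: cross_mult_right)
    also have "\<dots> = (1 / norm n) * (a * (n \<bullet> n))"
      unfolding triple_swap[of "\<xi>' s" "\<xi> s" n] x'x by simp
    finally have "k \<noteq> 0" using a0 nn by simp
    then have "L \<noteq> (\<lambda>_. 0)" using L01 by auto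
    then show ?thesis using hL unfolding lam_def by blast
  qed
  show ?thesis using P1 P2 P3 by blast
qed

end
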